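(* Let $s\in(0,1]$, $p>1$ and $q=\frac{p}{p-1}$. Let $I\subseteq\mathbb{R}$ be an interval, $a,b\in I$ with $a<b$, and let $f:I\to\mathbb{R}$ be differentiable on $I^\circ$ with $f'\in L^1[a,b]$, and suppose $|f'|$ is $s$-convex on $[a,b]$ in the sense that $|f'(tx+(1-t)y)|\le t^{s}|f'(x)|+(1-t^{s})|f'(y)|$ for all $x,y\in[a,b]$, $t\in[0,1]$. Then for every partition $D=\{a=x_0<x_1<\dots<x_n=b\}$ of $[a,b]$, the trapezoidal error $$R(f,D)=\int_a^b f(x)\,dx-\sum_{k=0}^{n-1}\frac{f(x_k)+f(x_{k+1})}{2}(x_{k+1}-x_k)$$ satisfies $$|R(f,D)|\le \frac{1}{2^{1/p}}\left(\frac{s\cdot 2^s+1}{2^s(s+1)(s+2)}\right)^{1/q}\sum_{k=0}^{n-1}\frac{(x_{k+1}-x_k)^2}{2}\bigl[|f'(x_k)|+|f'(x_{k+1})|\bigr].$$ *)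

theory Defs
  imports "HOL-Analysis.Analysis"
begin

definition s_convex_on :: "real \<Rightarrow> real set \<Rightarrow> (real \<Rightarrow> real) \<Rightarrow> bool" where
  "s_convex_on s S g \<longleftrightarrow>
     (\<forall>x\<in>S. \<forall>y\<in>S. \<forall>t\<in>{0..1}.
        g (t * x + (1 - t) * y) \<le> t powr s * g x + (1 - t powr s) * g y)"

definition trap_error :: "(real \<Rightarrow> real) \<Rightarrow> (nat \<Rightarrow> real) \<Rightarrow> nat \<Rightarrow> real" where
  "trap_error f x n =
     integral {x 0..x n} f - (\<Sum>k<n. (f (x k) + f (x (Suc k))) / 2 * (x (Suc k) - x k))"

end

theory Submission
  imports Defs
begin

lemma alg1:
  fixes h s w P :: real
  assumes "h \<noteq> 0" "s+2 \<noteq> 0" "s+1 \<noteq> 0"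
  shows "h^2 * ((s+2) * (w * P) * (-1/h) / (s+2) - (s+1) * P * (-1/h) / (2*(s+1))) = - h * (w - 1/2) * P"
proof -
  have a: "(s+2) * (w * P) * (-1/h) / (s+2) = - (w*P/h)" using assms by simp
  have b0: "h*2 + h*(s*2) \<noteq> 0"
  proof -
    have "h*2 + h*(s*2) = 2*h*(1+s)" by (simp add: algebra_simps)
    thus ?thesis using assms by (simp add: add.commute)
  qed
  have b: "(s+1) * P * (-1/h) / (2*(s+1)) = - (P/(2*h))" using assms b0 by (simp add: field_simps)
  show ?thesis unfolding a b using assms by (simp add: field_simps power2_eq_square)
qed

definition FF :: "real \<Rightarrow> real \<Rightarrow> real \<Rightarrow> real \<Rightarrow> real" where
  "FF s u v y = (v-u)^2 * (((v-y)/(v-u)) powr (s+2)/(s+2) - ((v-y)/(v-u)) powr (s+1)/(2*(s+1)))"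

lemma FF_cont:
  assumes uv: "u < v" and s: "0 < s"
  shows "continuous_on {u..v} (FF s u v)"
  unfolding FF_def[abs_def]
  using uv s by (intro continuous_intros continuous_on_powr') auto

lemma FF_deriv:
  fixes u v s y :: real
  assumes uv: "u < v" and s: "0 < s" and y: "y < v"
  shows "(FF s u v has_real_derivative (y - (u+v)/2) * ((v-y)/(v-u)) powr s) (at y)"
proof -
  define w where "w = (v-y)/(v-u)"
  have w: "w > 0" using uv y by (auto simp: w_def)
  have dw: "((\<lambda>y. (v-y)/(v-u)) has_real_derivative (-1/(v-u))) (at y)"
    using DERIV_cdivide[OF DERIV_diff[OF DERIV_const[of v] DERIV_ident], of "v-u"] by simp
  have d1: "((\<lambda>y. ((v-y)/(v-u)) powr (s+2)) has_real_derivative (s+2) * w powr (s+2-1) * (-1/(v-u))) (at y)"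
    using DERIV_fun_powr[OF dw, of "s+2"] w unfolding w_def by simp
  have d2: "((\<lambda>y. ((v-y)/(v-u)) powr (s+1)) has_real_derivative (s+1) * w powr (s+1-1) * (-1/(v-u))) (at y)"
    using DERIV_fun_powr[OF dw, of "s+1"] w unfolding w_def by simp
  have "(FF s u v has_real_derivative (v-u)^2 * ((s+2) * w powr (s+2-1) * (-1/(v-u)) / (s+2) - (s+1) * w powr (s+1-1) * (-1/(v-u)) / (2*(s+1)))) (at y)"
    unfolding FF_def[abs_def] by (intro DERIV_cmult DERIV_diff DERIV_cdivide d1 d2)
  moreover have "(v-u)^2 * ((s+2) * w powr (s+2-1) * (-1/(v-u)) / (s+2) - (s+1) * w powr (s+1-1) * (-1/(v-u)) / (2*(s+1)))
     = (y - (u+v)/2) * w powr s"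
  proof -
    have e: "w powr (s+2-1) = w * w powr s" using w by (simp add: powr_add add.commute)
    have e2: "w powr (s+1-1) = w powr s" by simp
    have n: "s+2 \<noteq> 0" "s+1 \<noteq> 0" "v - u \<noteq> 0" using uv s by auto
    have "(v-u)^2 * ((s+2) * (w * w powr s) * (-1/(v-u)) / (s+2) - (s+1) * w powr s * (-1/(v-u)) / (2*(s+1)))
         = - (v-u) * (w - 1/2) * w powr s" by (rule alg1[OF n(3) n(1) n(2)])
    also have "\<dots> = (y - (u+v)/2) * w powr s" using n unfolding w_def by (simp add: field_simps)
    finally show ?thesis unfolding e e2 .
  qed
  ultimately show ?thesis by (simp add: w_def)
qed

lemma FF_vals:
  assumes uv: "u < v" and s: "0 < s"
  shows "FF s u v v = 0"
    and "FF s u v u = (v-u)^2 * s / (2*(s+1)*(s+2))"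
    and "FF s u v ((u+v)/2) = -((v-u)^2 * (1/2) powr s / (4*(s+1)*(s+2)))"
proof -
  show "FF s u v v = 0" unfolding FF_def by simp
  have n: "s+2 \<noteq> 0" "s+1 \<noteq> 0" using s by auto
  show "FF s u v u = (v-u)^2 * s / (2*(s+1)*(s+2))" unfolding FF_def using uv n
    by (simp add: field_simps)
  have h: "(v - (u+v)/2)/(v-u) = 1/2" using uv by (simp add: field_simps)
  have p2: "(1/2::real) powr (s+2) = (1/2) powr s / 4" by (simp add: powr_add power2_eq_square)
  have p1: "(1/2::real) powr (s+1) = (1/2) powr s / 2" by (simp add: powr_add)
  have g: "\<And>X Q a b::real. a \<noteq> 0 \<Longrightarrow> b \<noteq> 0 \<Longrightarrow> b = a + 1 \<Longrightarrow>
     X*((Q/4)/b - (Q/2)/(2*a)) = -(X*Q/(4*a*b))"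
  proof -
    fix X Q a b :: real assume ab: "a \<noteq> 0" "b \<noteq> 0" "b = a + 1"
    have "(Q/4)/b - (Q/2)/(2*a) = Q*(a-b)/(4*a*b)" using ab(1,2) by (simp add: field_simps)
    also have "a - b = -1" using ab(3) by simp
    finally show "X*((Q/4)/b - (Q/2)/(2*a)) = -(X*Q/(4*a*b))" by simp
  qed
  show "FF s u v ((u+v)/2) = -((v-u)^2 * (1/2) powr s / (4*(s+1)*(s+2)))" unfolding FF_def h p1 p2
    by (rule g) (use n in auto)
qed

lemma abs_powr_int:
  fixes u v s :: real
  assumes uv: "u < v" and s: "0 < s"
  shows "((\<lambda>y. \<bar>y - (u+v)/2\<bar> * ((v-y)/(v-u)) powr s) has_integral
          ((v-u)^2/2 * ((s + (1/2) powr s)/((s+1)*(s+2))))) {u..v}"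
proof -
  let ?m = "(u+v)/2"
  have contm: "continuous_on {?m..v} (FF s u v)" "continuous_on {u..?m} (\<lambda>y. - FF s u v y)"
    using FF_cont[OF uv s] by (auto intro!: continuous_intros elim: continuous_on_subset)
  have R: "((\<lambda>y. (y - ?m) * ((v-y)/(v-u)) powr s) has_integral (FF s u v v - FF s u v ?m)) {?m..v}"
    apply (rule fundamental_theorem_of_calculus_interior)
    using uv contm apply simp_all
    using FF_deriv[OF uv s] by (auto simp: has_real_derivative_iff_has_vector_derivative[symmetric])
  have L: "((\<lambda>y. - ((y - ?m) * ((v-y)/(v-u)) powr s)) has_integral (- FF s u v ?m - (- FF s u v u))) {u..?m}"
    apply (rule fundamental_theorem_of_calculus_interior)
    using uv contm apply simp_all
    using FF_deriv[OF uv s] uv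
    by (auto intro!: DERIV_minus simp: has_real_derivative_iff_has_vector_derivative[symmetric])
  have R': "((\<lambda>y. \<bar>y - ?m\<bar> * ((v-y)/(v-u)) powr s) has_integral (FF s u v v - FF s u v ?m)) {?m..v}"
    by (rule has_integral_eq[OF _ R]) auto
  have L': "((\<lambda>y. \<bar>y - ?m\<bar> * ((v-y)/(v-u)) powr s) has_integral (- FF s u v ?m - (- FF s u v u))) {u..?m}"
    by (rule has_integral_eq[OF _ L]) (auto simp: abs_of_nonpos algebra_simps)
  have T: "((\<lambda>y. \<bar>y - ?m\<bar> * ((v-y)/(v-u)) powr s) has_integral
     ((- FF s u v ?m - (- FF s u v u)) + (FF s u v v - FF s u v ?m))) {u..v}"
    by (rule has_integral_combine[OF _ _ L' R']) (use uv in auto)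
  have n: "s+2 \<noteq> 0" "s+1 \<noteq> 0" using s by auto
  have "(- FF s u v ?m - (- FF s u v u)) + (FF s u v v - FF s u v ?m) = (v-u)^2/2 * ((s + (1/2) powr s)/((s+1)*(s+2)))"
  proof -
    have g: "\<And>X Q a b::real. a \<noteq> 0 \<Longrightarrow> b \<noteq> 0 \<Longrightarrow>
     (- (-(X * Q / (4*a*b))) - (- (X * s / (2*a*b)))) + (0 - (-(X * Q / (4*a*b)))) = X/2 * ((s+Q)/(a*b))"
      by (simp add: field_simps)
    show ?thesis unfolding FF_vals[OF uv s] by (rule g) (use n in auto)
  qed
  with T show ?thesis by simp
qed

lemma abs_int:
  fixes u v :: real
  assumes uv: "u < v"
  shows "((\<lambda>y. \<bar>y - (u+v)/2\<bar>) has_integral ((v-u)^2/4)) {u..v}"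
proof -
  let ?m = "(u+v)/2"
  have R: "((\<lambda>y. (y - ?m)) has_integral ((v - ?m)^2/2 - (?m - ?m)^2/2)) {?m..v}"
    apply (rule fundamental_theorem_of_calculus)
    using uv apply simp
    by (auto intro!: derivative_eq_intros simp: has_real_derivative_iff_has_vector_derivative[symmetric])
  have L: "((\<lambda>y. ?m - y) has_integral ((?m*?m - ?m^2/2) - (?m*u - u^2/2))) {u..?m}"
    apply (rule fundamental_theorem_of_calculus)
    using uv apply simp
    by (auto intro!: derivative_eq_intros simp: has_real_derivative_iff_has_vector_derivative[symmetric])
  have R': "((\<lambda>y. \<bar>y - ?m\<bar>) has_integral ((v - ?m)^2/2 - (?m - ?m)^2/2)) {?m..v}"
    by (rule has_integral_eq[OF _ R]) auto
  have L': "((\<lambda>y. \<bar>y - ?m\<bar>) has_integral ((?m*?m - ?m^2/2) - (?m*u - u^2/2))) {u..?m}"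
    by (rule has_integral_eq[OF _ L]) auto
  have T: "((\<lambda>y. \<bar>y - ?m\<bar>) has_integral (((?m*?m - ?m^2/2) - (?m*u - u^2/2)) + ((v - ?m)^2/2 - (?m - ?m)^2/2))) {u..v}"
    by (rule has_integral_combine[OF _ _ L' R']) (use uv in auto)
  moreover have eq: "((?m*?m - ?m^2/2) - (?m*u - u^2/2)) + ((v - ?m)^2/2 - (?m - ?m)^2/2) = (v-u)^2/4"
    by (simp add: field_simps power2_eq_square)
  ultimately show ?thesis by (simp only: eq)
qed

lemma interval_est:
  fixes f f' :: "real \<Rightarrow> real" and u v s A B :: real
  assumes uv: "u < v" and s: "0 < s"
    and deriv: "\<And>y. y \<in> {u..v} \<Longrightarrow> (f has_real_derivative f' y) (at y)"
    and bnd: "\<And>y. y \<in> {u..v} \<Longrightarrow> \<bar>f' y\<bar> \<le> ((v-y)/(v-u)) powr s * A + (1 - ((v-y)/(v-u)) powr s) * B"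
  shows "\<bar>integral {u..v} f - (f u + f v)/2*(v-u)\<bar> \<le>
     (v-u)^2/2 * ((s + (1/2) powr s)/((s+1)*(s+2)) * A + (1/2 - (s + (1/2) powr s)/((s+1)*(s+2))) * B)"
proof -
  define m where "m = (u+v)/2"
  define Cs where "Cs = (s + (1/2) powr s)/((s+1)*(s+2))"
  define w where "w = (\<lambda>y. ((v-y)/(v-u)) powr s)"
  have contf: "continuous_on {u..v} f"
    using deriv DERIV_isCont by (intro continuous_at_imp_continuous_on) blast
  have intf: "f integrable_on {u..v}" by (rule integrable_continuous_real[OF contf])
  have P: "((\<lambda>y. f y + (y-m)*f' y) has_integral ((v-m)*f v - (u-m)*f u)) {u..v}"
  proof (rule fundamental_theorem_of_calculus)
    show "u \<le> v" using uv by simp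
    fix y assume y: "y \<in> {u..v}"
    have "((\<lambda>y. (y-m)*f y) has_real_derivative (1 * f y + (y-m)*f' y)) (at y)"
      using DERIV_mult[OF DERIV_diff[OF DERIV_ident DERIV_const[of m]] deriv[OF y]] by (simp add: mult.commute)
    thus "((\<lambda>y. (y-m)*f y) has_vector_derivative (f y + (y-m)*f' y)) (at y within {u..v})"
      by (simp add: has_real_derivative_iff_has_vector_derivative[symmetric] has_field_derivative_at_within)
  qed
  have G: "((\<lambda>y. (y-m)*f' y) has_integral ((v-m)*f v - (u-m)*f u - integral {u..v} f)) {u..v}"
    by (rule has_integral_eq[OF _ has_integral_diff[OF P integrable_integral[OF intf]]]) simp
  have E: "integral {u..v} f - (f u + f v)/2*(v-u) = - integral {u..v} (\<lambda>y. (y-m)*f' y)"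
    using integral_unique[OF G] unfolding m_def by (simp add: field_simps)
  define g where "g = (\<lambda>y. A * (\<bar>y - m\<bar> * w y) + B * (\<bar>y - m\<bar> - \<bar>y - m\<bar> * w y))"
  have gi: "(g has_integral (A * ((v-u)^2/2 * Cs) + B * ((v-u)^2/4 - (v-u)^2/2 * Cs))) {u..v}"
    unfolding g_def w_def m_def Cs_def
    by (rule has_integral_add[OF has_integral_mult_right[OF abs_powr_int[OF uv s]]
        has_integral_mult_right[OF has_integral_diff[OF abs_int[OF uv] abs_powr_int[OF uv s]]]])
  have "\<bar>integral {u..v} (\<lambda>y. (y-m)*f' y)\<bar> \<le> integral {u..v} g"
  proof -
    have "norm (integral {u..v} (\<lambda>y. (y-m)*f' y)) \<le> integral {u..v} g"
    proof (rule integral_norm_bound_integral)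
      show "(\<lambda>y. (y-m)*f' y) integrable_on {u..v}" using G by blast
      show "g integrable_on {u..v}" using gi by blast
      fix y assume y: "y \<in> {u..v}"
      have "norm ((y-m)*f' y) = \<bar>y-m\<bar> * \<bar>f' y\<bar>" by (simp add: abs_mult)
      also have "\<dots> \<le> \<bar>y-m\<bar> * (w y * A + (1 - w y) * B)"
        using bnd[OF y] unfolding w_def by (intro mult_left_mono) auto
      also have "\<dots> = g y" unfolding g_def by (simp add: algebra_simps)
      finally show "norm ((y-m)*f' y) \<le> g y" .
    qed
    thus ?thesis by simp
  qed
  also have "integral {u..v} g = (v-u)^2/2 * (Cs * A + (1/2 - Cs) * B)"
    using integral_unique[OF gi] by (simp add: field_simps power2_eq_square)
  finally show ?thesis unfolding E Cs_def by simp
qed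

lemma const_facts:
  fixes s p q :: real
  assumes s: "0 < s" "s \<le> 1" and p: "p > 1" and q: "q = p / (p - 1)"
  defines "C \<equiv> (s * 2 powr s + 1) / (2 powr s * (s + 1) * (s + 2))"
  shows "(s + (1/2) powr s)/((s+1)*(s+2)) = C"
    and "1/4 \<le> C" and "C \<le> 1/2"
    and "C \<le> 1 / 2 powr (1 / p) * C powr (1 / q)"
proof -
  define P where "P = (2::real) powr s"
  have P1: "1 \<le> P" unfolding P_def using s by (intro ge_one_powr_ge_zero) auto
  have P2: "P \<le> 2" unfolding P_def using s powr_mono[of s 1 2] by simp
  have hp: "(1/2::real) powr s = 1 / P" unfolding P_def by (simp add: powr_divide)
  have n: "s+1 > 0" "s+2 > 0" "P > 0" using s P1 by auto
  show "(s + (1/2) powr s)/((s+1)*(s+2)) = C" unfolding C_def P_def[symmetric] hp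
    using n by (simp add: field_simps)
  have ss: "s * s \<le> 1 * s" by (rule mult_right_mono) (use s in auto)
  have "P * (s * s - s + 2) \<le> 2 * 2"
  proof (rule mult_mono)
    show "0 \<le> s * s - s + 2" using s zero_le_square[of s] by linarith
  qed (use P2 s P1 ss in auto)
  hence "P * (s+1)*(s+2) \<le> 4 * (s * P + 1)" by (simp add: algebra_simps)
  moreover have D: "0 < P * (s+1)*(s+2)" using n by simp
  ultimately show "1/4 \<le> C" unfolding C_def P_def[symmetric] by (simp add: pos_le_divide_eq)
  have "1 * 2 \<le> P * (s * s + s + 2)" by (rule mult_mono) (use P1 s in auto)
  hence "2 * (s * P + 1) \<le> P * (s+1)*(s+2)" by (simp add: algebra_simps)
  thus "C \<le> 1/2" unfolding C_def P_def[symmetric] using D by (simp add: pos_divide_le_eq)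
  have Cpos: "0 < C" using \<open>1/4 \<le> C\<close> by simp
  have iq: "1/q = 1 - 1/p" using p unfolding q by (simp add: field_simps)
  have "C = C powr (1/p + 1/q)" using Cpos unfolding iq by simp
  also have "\<dots> = C powr (1/p) * C powr (1/q)" by (simp add: powr_add)
  also have "\<dots> \<le> (1/2) powr (1/p) * C powr (1/q)"
    by (intro mult_right_mono powr_mono2) (use p Cpos \<open>C \<le> 1/2\<close> in auto)
  also have "(1/2::real) powr (1/p) = 1 / 2 powr (1/p)" by (simp add: powr_divide)
  finally show "C \<le> 1 / 2 powr (1 / p) * C powr (1 / q)" .
qed

theorem proposition4:
  fixes s p q a b :: real and I :: "real set" and f f' :: "real \<Rightarrow> real"
    and x :: "nat \<Rightarrow> real" and n :: nat
  assumes s: "0 < s" "s \<le> 1"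
    and p: "p > 1" and q: "q = p / (p - 1)"
    and I: "is_interval I"
    and ab: "a \<in> interior I" "b \<in> interior I" "a < b"
    and deriv: "\<And>y. y \<in> interior I \<Longrightarrow> (f has_real_derivative f' y) (at y)"
    and L1: "set_integrable lborel {a..b} f'"
    and sconv: "s_convex_on s {a..b} (\<lambda>y. \<bar>f' y\<bar>)"
    and part: "x 0 = a" "x n = b" "\<And>k. k < n \<Longrightarrow> x k < x (Suc k)"
  shows "\<bar>trap_error f x n\<bar> \<le>
    1 / 2 powr (1 / p)
    * ((s * 2 powr s + 1) / (2 powr s * (s + 1) * (s + 2))) powr (1 / q)
    * (\<Sum>k<n. (x (Suc k) - x k)^2 / 2 * (\<bar>f' (x k)\<bar> + \<bar>f' (x (Suc k))\<bar>))"
proof -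
  define C where "C = (s * 2 powr s + 1) / (2 powr s * (s + 1) * (s + 2))"
  define K where "K = 1 / 2 powr (1 / p) * C powr (1 / q)"
  have CF: "(s + (1/2) powr s)/((s+1)*(s+2)) = C" "1/4 \<le> C" "C \<le> 1/2" "C \<le> K"
    using const_facts[OF s p q] unfolding C_def K_def by auto
  have intI: "is_interval (interior I)"
    using I by (simp add: is_interval_convex_1)
  have abI: "\<And>y. y \<in> {a..b} \<Longrightarrow> y \<in> interior I"
  proof -
    fix y assume y: "y \<in> {a..b}"
    have "\<forall>a\<in>interior I. \<forall>b\<in>interior I. \<forall>x. a \<le> x \<and> x \<le> b \<longrightarrow> x \<in> interior I"
      using intI is_interval_1 by blast
    hence "a \<le> y \<and> y \<le> b \<longrightarrow> y \<in> interior I" using ab(1,2) by blast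
    thus "y \<in> interior I" using y by simp
  qed
  have mono: "\<And>k j. k \<le> j \<Longrightarrow> j \<le> n \<Longrightarrow> x k \<le> x j"
  proof -
    fix k j :: nat assume "k \<le> j" "j \<le> n"
    thus "x k \<le> x j"
    proof (induction j)
      case 0 thus ?case by simp
    next
      case (Suc j)
      show ?case
      proof (cases "k = Suc j")
        case True thus ?thesis by simp
      next
        case False
        hence "k \<le> j" using Suc by simp
        hence "x k \<le> x j" using Suc by simp
        also have "x j < x (Suc j)" using part(3)[of j] Suc by simp
        finally show ?thesis by simp
      qed
    qed
  qed
  have xab: "\<And>k. k \<le> n \<Longrightarrow> x k \<in> {a..b}"
  proof -
    fix k assume k: "k \<le> n"
    have "x 0 \<le> x k" "x k \<le> x n" using mono[of 0 k] mono[of k n] k by auto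
    thus "x k \<in> {a..b}" using part by auto
  qed
  have derab: "\<And>y. y \<in> {a..b} \<Longrightarrow> (f has_real_derivative f' y) (at y)"
    using deriv abI by blast
  have contf: "continuous_on {a..b} f"
    using derab DERIV_isCont by (intro continuous_at_imp_continuous_on) blast
  have intf: "f integrable_on {a..b}" by (rule integrable_continuous_real[OF contf])
  have split: "\<And>m. m \<le> n \<Longrightarrow> integral {x 0..x m} f = (\<Sum>k<m. integral {x k..x (Suc k)} f)"
  proof -
    fix m assume "m \<le> n"
    thus "integral {x 0..x m} f = (\<Sum>k<m. integral {x k..x (Suc k)} f)"
    proof (induction m)
      case 0 thus ?case by simp
    next
      case (Suc m)
      have sub: "{x 0..x (Suc m)} \<subseteq> {a..b}" using xab[of 0] xab[of "Suc m"] Suc by auto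
      have "integral {x 0..x m} f + integral {x m..x (Suc m)} f = integral {x 0..x (Suc m)} f"
        by (rule Henstock_Kurzweil_Integration.integral_combine) (use mono[of 0 m] mono[of m "Suc m"] Suc integrable_on_subinterval[OF intf sub] in auto)
      thus ?case using Suc by simp
    qed
  qed
  define E where "E = (\<lambda>k. integral {x k..x (Suc k)} f - (f (x k) + f (x (Suc k))) / 2 * (x (Suc k) - x k))"
  have TE: "trap_error f x n = (\<Sum>k<n. E k)"
    unfolding trap_error_def E_def split[OF order_refl] by (simp add: sum_subtractf)
  have Eb: "\<And>k. k < n \<Longrightarrow> \<bar>E k\<bar> \<le> K * ((x (Suc k) - x k)^2 / 2 * (\<bar>f' (x k)\<bar> + \<bar>f' (x (Suc k))\<bar>))"
  proof -
    fix k assume k: "k < n"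
    define u where "u = x k"
    define v where "v = x (Suc k)"
    have uv: "u < v" using part(3)[OF k] by (simp add: u_def v_def)
    have uab: "u \<in> {a..b}" "v \<in> {a..b}" using xab[of k] xab[of "Suc k"] k by (auto simp: u_def v_def)
    have sub: "{u..v} \<subseteq> {a..b}" using uab by auto
    have bnd: "\<And>y. y \<in> {u..v} \<Longrightarrow> \<bar>f' y\<bar> \<le> ((v-y)/(v-u)) powr s * \<bar>f' u\<bar> + (1 - ((v-y)/(v-u)) powr s) * \<bar>f' v\<bar>"
    proof -
      fix y assume y: "y \<in> {u..v}"
      define t where "t = (v-y)/(v-u)"
      have t: "t \<in> {0..1}" using y uv by (auto simp: t_def field_simps)
      have t1: "t * (v - u) = v - y" using uv unfolding t_def by simp
      have ty: "t * u + (1 - t) * v = y"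
      proof -
        have "t * u + (1 - t) * v = v - t * (v - u)" by (simp add: algebra_simps)
        thus ?thesis using t1 by simp
      qed
      show "\<bar>f' y\<bar> \<le> ((v-y)/(v-u)) powr s * \<bar>f' u\<bar> + (1 - ((v-y)/(v-u)) powr s) * \<bar>f' v\<bar>"
      proof -
        have "\<forall>xa\<in>{a..b}. \<forall>ya\<in>{a..b}. \<forall>t\<in>{0..1}. \<bar>f' (t * xa + (1 - t) * ya)\<bar> \<le> t powr s * \<bar>f' xa\<bar> + (1 - t powr s) * \<bar>f' ya\<bar>"
          using sconv unfolding s_convex_on_def .
        hence "\<bar>f' (t * u + (1 - t) * v)\<bar> \<le> t powr s * \<bar>f' u\<bar> + (1 - t powr s) * \<bar>f' v\<bar>"
          using uab t by blast
        thus ?thesis unfolding ty by (simp add: t_def)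
      qed
    qed
    have "\<bar>E k\<bar> \<le> (v-u)^2/2 * (C * \<bar>f' u\<bar> + (1/2 - C) * \<bar>f' v\<bar>)"
    proof -
      have d: "\<And>y. y \<in> {u..v} \<Longrightarrow> (f has_real_derivative f' y) (at y)" using derab sub by blast
      show ?thesis using interval_est[OF uv s(1) d bnd] unfolding CF(1) E_def u_def v_def .
    qed
    also have "\<dots> \<le> (v-u)^2/2 * (K * \<bar>f' u\<bar> + K * \<bar>f' v\<bar>)"
    proof -
      have "C * \<bar>f' u\<bar> + (1/2 - C) * \<bar>f' v\<bar> \<le> K * \<bar>f' u\<bar> + K * \<bar>f' v\<bar>"
        by (intro add_mono mult_right_mono) (use CF in auto)
      thus ?thesis by (intro mult_left_mono) auto
    qed
    also have "\<dots> = K * ((x (Suc k) - x k)^2 / 2 * (\<bar>f' (x k)\<bar> + \<bar>f' (x (Suc k))\<bar>))"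
      unfolding u_def v_def by (simp add: algebra_simps)
    finally show "\<bar>E k\<bar> \<le> K * ((x (Suc k) - x k)^2 / 2 * (\<bar>f' (x k)\<bar> + \<bar>f' (x (Suc k))\<bar>))" .
  qed
  have "\<bar>trap_error f x n\<bar> \<le> (\<Sum>k<n. \<bar>E k\<bar>)" unfolding TE by (rule sum_abs)
  also have "\<dots> \<le> (\<Sum>k<n. K * ((x (Suc k) - x k)^2 / 2 * (\<bar>f' (x k)\<bar> + \<bar>f' (x (Suc k))\<bar>)))"
    by (rule sum_mono) (use Eb in auto)
  also have "\<dots> = K * (\<Sum>k<n. (x (Suc k) - x k)^2 / 2 * (\<bar>f' (x k)\<bar> + \<bar>f' (x (Suc k))\<bar>))"
    by (simp add: sum_distrib_left)
  finally show ?thesis unfolding K_def C_def .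
qed

end
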